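(* Let $a\ge0$, $x^*=(a,a)^\top$, $y=(y_1,y_2)\sim\mathcal N(x^*,I_2)$, and $$\lambda(0,y)=\min_{x_1=x_2,\ x\ge0}\|x-y\|_2^2-\min_{x\ge0}\|x-y\|_2^2,$$ which equals $$(y_1^2+y_2^2)\mathbf 1\{y_1+y_2<0\}+\tfrac12(y_1-y_2)^2\mathbf 1\{y_1+y_2\ge0\}-y_1^2\mathbf 1\{y_1<0\}-y_2^2\mathbf 1\{y_2<0\}.$$ Then $\lambda(0,y)$ is stochastically dominated by a $\chi^2_1$ random variable. Consequently the example $K=I_2$, $h=(1,-1)^\top$, $x^*=(a,a)^\top$ is not a counterexample to the Rust–Burrus conjecture.
   Context: A real random variable $X$ stochastically dominates $Y$ if $\mathbb P(X>z)\ge\mathbb P(Y>z)$ for all $z\in\mathbb R$. Vector inequalities are componentwise. The Rust–Burrus conjecture asserts that for $y\sim\mathcal N(Kx^*,I_m)$ with $x^*\ge0$, the interval $[\min h^\top x,\max h^\top x]$ over $\{x\ge0:\|y-Kx\|_2^2\le z^2_{\alpha/2}+\min_{x'\ge0}\|y-Kx'\|_2^2\}$ covers $h^\top x^*$ with probability at least $1-\alpha$ for all $\alpha\in(0,1)$, where $\mathbb P(N>z_{\alpha/2})=\alpha/2$ for $N\sim\mathcal N(0,1)$. *)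

theory Defs
  imports "HOL-Probability.Probability"
begin

definition sqdist2 :: "real \<times> real \<Rightarrow> real \<times> real \<Rightarrow> real" where
  "sqdist2 u v = (fst u - fst v)\<^sup>2 + (snd u - snd v)\<^sup>2"

definition nonneg2 :: "real \<times> real \<Rightarrow> bool" where
  "nonneg2 x \<longleftrightarrow> fst x \<ge> 0 \<and> snd x \<ge> 0"

definition lam0 :: "real \<times> real \<Rightarrow> real" where
  "lam0 y = (INF x\<in>{x. nonneg2 x \<and> fst x = snd x}. sqdist2 x y)
            - (INF x\<in>{x. nonneg2 x}. sqdist2 x y)"

definition gauss2 :: "real \<Rightarrow> (real \<times> real) measure" where
  "gauss2 a = density lborel (\<lambda>y. ennreal (normal_density a 1 (fst y) * normal_density a 1 (snd y)))"

definition stdN :: "real measure" where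
  "stdN = density lborel (\<lambda>t. ennreal (std_normal_density t))"

text \<open>Rust--Burrus confidence set with K = I_2 and threshold c (= z_{alpha/2}^2).\<close>
definition rb_set :: "real \<times> real \<Rightarrow> real \<Rightarrow> (real \<times> real) set" where
  "rb_set y c = {x. nonneg2 x \<and> sqdist2 y x \<le> c + (INF x'\<in>{x'. nonneg2 x'}. sqdist2 y x')}"

definition hfun :: "real \<times> real \<Rightarrow> real" where
  "hfun x = fst x - snd x"

definition rb_covers :: "real \<times> real \<Rightarrow> real \<Rightarrow> real \<times> real \<Rightarrow> bool" where
  "rb_covers y c xstar \<longleftrightarrow>
     Inf (hfun ` rb_set y c) \<le> hfun xstar \<and> hfun xstar \<le> Sup (hfun ` rb_set y c)"

end

theory Submission
  imports Defs
begin


definition m1 :: "real \<times> real \<Rightarrow> real" where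
  "m1 y = (if fst y + snd y < 0 then fst y ^ 2 + snd y ^ 2 else (fst y - snd y) ^ 2 / 2)"
definition m2 :: "real \<times> real \<Rightarrow> real" where
  "m2 y = (if fst y < 0 then fst y ^ 2 else 0) + (if snd y < 0 then snd y ^ 2 else 0)"

lemma sq_lb: "0 \<le> (x::real) \<Longrightarrow> (if y < 0 then y^2 else 0) \<le> (x - y)^2"
proof (cases "y < 0")
  case True
  assume "0 \<le> x"
  then have "-y \<le> x - y" "0 \<le> -y" using True by auto
  then have "(-y)^2 \<le> (x-y)^2" by (rule power_mono)
  then show ?thesis using True by simp
qed simp

lemma diag_lb: "0 \<le> (t::real) \<Longrightarrow> (if a+b<0 then a^2+b^2 else (a-b)^2/2) \<le> (t-a)^2+(t-b)^2"
proof (cases "a+b<0")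
  case True
  assume "0 \<le> t"
  have "(t-a)^2+(t-b)^2 - (a^2+b^2) = 2*t*t - 2*t*(a+b)" by (simp add: power2_eq_square algebra_simps)
  moreover have "0 \<le> 2*t*t - 2*t*(a+b)" using True \<open>0 \<le> t\<close>
  proof -
    have "0 \<le> 2*t*(t - (a+b))" using True \<open>0 \<le> t\<close> by simp
    then show ?thesis by (simp add: algebra_simps)
  qed
  ultimately show ?thesis using True by simp
next
  case False
  have "(t-a)^2+(t-b)^2 - (a-b)^2/2 = 2*(t-(a+b)/2)^2" by (simp add: power2_eq_square field_simps; algebra)
  moreover have "0 \<le> 2*(t-(a+b)/2)^2" by simp
  ultimately have "(a-b)^2/2 \<le> (t-a)^2+(t-b)^2" by linarith
  then show ?thesis using False by simp
qed

lemma sqdist2_sym: "sqdist2 u v = sqdist2 v u"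
  unfolding sqdist2_def by (simp add: power2_commute)

lemma INF2: "(INF x\<in>{x. nonneg2 x}. sqdist2 x y) = m2 y"
proof (rule cInf_eq_minimum)
  show "m2 y \<in> (\<lambda>x. sqdist2 x y) ` {x. nonneg2 x}"
    by (rule image_eqI[of _ _ "(max (fst y) 0, max (snd y) 0)"])
       (auto simp: sqdist2_def m2_def nonneg2_def max_def)
next
  fix r assume "r \<in> (\<lambda>x. sqdist2 x y) ` {x. nonneg2 x}"
  then obtain x where x: "nonneg2 x" "r = sqdist2 x y" by auto
  show "m2 y \<le> r" using x sq_lb[of "fst x" "fst y"] sq_lb[of "snd x" "snd y"]
    by (simp add: sqdist2_def m2_def nonneg2_def)
qed

lemma INF1: "(INF x\<in>{x. nonneg2 x \<and> fst x = snd x}. sqdist2 x y) = m1 y"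
proof (rule cInf_eq_minimum)
  show "m1 y \<in> (\<lambda>x. sqdist2 x y) ` {x. nonneg2 x \<and> fst x = snd x}"
  proof (rule image_eqI[of _ _ "(max 0 ((fst y + snd y)/2), max 0 ((fst y + snd y)/2))"])
    show "m1 y = sqdist2 (max 0 ((fst y + snd y) / 2), max 0 ((fst y + snd y) / 2)) y"
      by (auto simp: sqdist2_def m1_def max_def power2_eq_square field_simps)
  qed (auto simp: nonneg2_def)
next
  fix r assume "r \<in> (\<lambda>x. sqdist2 x y) ` {x. nonneg2 x \<and> fst x = snd x}"
  then obtain x where x: "nonneg2 x" "fst x = snd x" "r = sqdist2 x y" by auto
  show "m1 y \<le> r" using x diag_lb[of "fst x" "fst y" "snd y"]
    by (simp add: sqdist2_def m1_def nonneg2_def)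
qed

lemma lam0_eq: "lam0 y = m1 y - m2 y"
  unfolding lam0_def INF1 INF2 ..

lemma lam0_formula: "lam0 y =
            (fst y ^ 2 + snd y ^ 2) * (if fst y + snd y < 0 then 1 else 0)
          + (1/2) * (fst y - snd y) ^ 2 * (if fst y + snd y \<ge> 0 then 1 else 0)
          - fst y ^ 2 * (if fst y < 0 then 1 else 0)
          - snd y ^ 2 * (if snd y < 0 then 1 else 0)"
  unfolding lam0_eq m1_def m2_def by auto

lemma sq_half: "0 \<le> (a::real) \<Longrightarrow> b < -a \<Longrightarrow> a^2 \<le> (a-b)^2/2"
proof -
  assume h: "0 \<le> a" "b < -a"
  have "2*a \<le> a - b" "0 \<le> 2*a" using h by auto
  then have "(2*a)^2 \<le> (a-b)^2" by (rule power_mono)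
  moreover have "(2*a)^2 = 4*a^2" by (simp add: power2_eq_square)
  moreover have "0 \<le> a^2" by simp
  ultimately show ?thesis by linarith
qed

lemma lam0_le: "lam0 y \<le> (fst y - snd y)^2 / 2"
proof -
  obtain a b where y: "y = (a,b)" by force
  have "m1 (a,b) - m2 (a,b) \<le> (a - b)^2/2"
  proof (cases "a + b < 0")
    case False
    have "0 \<le> m2 (a,b)" by (simp add: m2_def)
    moreover have "m1 (a,b) = (a-b)^2/2" using False by (simp add: m1_def)
    ultimately show ?thesis by simp
  next
    case True
    have m1e: "m1 (a,b) = a^2 + b^2" using True by (simp add: m1_def)
    have "a < 0 \<or> b < 0" using True by linarith
    then consider "a < 0" "b < 0" | "0 \<le> a" "b < 0" | "a < 0" "0 \<le> b" by linarith
    then show ?thesis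
    proof cases
      case 1
      then have "m2 (a,b) = a^2 + b^2" by (simp add: m2_def)
      then show ?thesis using m1e by simp
    next
      case 2
      then have "m2 (a,b) = b^2" by (simp add: m2_def)
      moreover have "a^2 \<le> (a-b)^2/2" using 2 True by (intro sq_half) auto
      ultimately show ?thesis using m1e by simp
    next
      case 3
      then have "m2 (a,b) = a^2" by (simp add: m2_def)
      moreover have "b^2 \<le> (b-a)^2/2" using 3 True by (intro sq_half) auto
      moreover have "(b-a)^2 = (a-b)^2" by (rule power2_commute)
      ultimately show ?thesis using m1e by simp
    qed
  qed
  then show ?thesis using y lam0_eq by simp
qed



lemma abs_le_sq: "\<bar>u::real\<bar> \<le> 1 + u^2"
proof -
  have "0 \<le> (\<bar>u\<bar> - 1/2)^2" by simp
  then show ?thesis by (simp add: power2_eq_square algebra_simps)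
qed

lemma conv_sq:
  fixes u v w t :: real
  assumes "0 \<le> t" "t \<le> 1"
  shows "((u + t*(v-u)) - w)^2 \<le> (1-t)*(u-w)^2 + t*(v-w)^2"
proof -
  have "(1-t)*(u-w)^2 + t*(v-w)^2 - ((u + t*(v-u)) - w)^2 = t*(1-t)*(u-v)^2"
    by (simp add: power2_eq_square algebra_simps)
  moreover have "0 \<le> t*(1-t)*(u-v)^2" using assms by simp
  ultimately show ?thesis by linarith
qed

lemma rb_set_eq: "rb_set y c = {x. nonneg2 x \<and> sqdist2 x y \<le> c + m2 y}"
  unfolding rb_set_def using INF2[of y] by (simp add: sqdist2_sym)

lemma cover_iff:
  assumes c: "0 \<le> c"
  shows "rb_covers y c (a,a) \<longleftrightarrow> lam0 y \<le> c"
proof -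
  define R where "R = c + m2 y"
  define S where "S = rb_set y c"
  have S: "S = {x. nonneg2 x \<and> sqdist2 x y \<le> R}" unfolding S_def R_def rb_set_eq ..
  have h0: "hfun (a,a) = 0" by (simp add: hfun_def)
  define B where "B = 2 + 2*R + \<bar>fst y - snd y\<bar>"
  have bnd: "\<bar>hfun x\<bar> \<le> B" if "x \<in> S" for x
  proof -
    have d: "(fst x - fst y)^2 + (snd x - snd y)^2 \<le> R" using that by (simp add: S sqdist2_def)
    have "0 \<le> (fst x - fst y)^2" "0 \<le> (snd x - snd y)^2" by simp_all
    moreover have "\<bar>fst x - fst y\<bar> \<le> 1 + (fst x - fst y)^2" "\<bar>snd x - snd y\<bar> \<le> 1 + (snd x - snd y)^2"
      by (rule abs_le_sq)+
    moreover have "hfun x = (fst x - fst y) - (snd x - snd y) + (fst y - snd y)" by (simp add: hfun_def)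
    ultimately show ?thesis using d unfolding B_def by linarith
  qed
  have bb: "bdd_below (hfun ` S)" by (rule bdd_belowI2[of _ "-B"]) (use bnd in force)
  have ba: "bdd_above (hfun ` S)" by (rule bdd_aboveI2[of _ _ "B"]) (use bnd in force)
  have cov: "rb_covers y c (a,a) \<longleftrightarrow> Inf (hfun ` S) \<le> 0 \<and> 0 \<le> Sup (hfun ` S)"
    unfolding rb_covers_def S_def h0 ..
  show ?thesis
  proof
    assume l: "lam0 y \<le> c"
    define d where "d = (max 0 ((fst y + snd y)/2), max 0 ((fst y + snd y)/2))"
    have "sqdist2 d y = m1 y"
      by (auto simp: d_def sqdist2_def m1_def max_def power2_eq_square field_simps)
    then have "d \<in> S" using l unfolding S R_def lam0_eq by (auto simp: d_def nonneg2_def)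
    moreover have "hfun d = 0" by (simp add: d_def hfun_def)
    ultimately have "0 \<in> hfun ` S" by force
    then show "rb_covers y c (a,a)" unfolding cov using cInf_lower[OF _ bb] cSup_upper[OF _ ba] by blast
  next
    assume rc: "rb_covers y c (a,a)"
    show "lam0 y \<le> c"
    proof (rule ccontr)
      assume nl: "\<not> lam0 y \<le> c"
      have nd: "hfun x \<noteq> 0" if "x \<in> S" for x
      proof
        assume "hfun x = 0"
        then have "fst x = snd x" by (simp add: hfun_def)
        moreover have "nonneg2 x" "sqdist2 x y \<le> R" using that S by auto
        ultimately have "m1 y \<le> R" using diag_lb[of "fst x" "fst y" "snd y"]
          by (simp add: sqdist2_def m1_def nonneg2_def)
        then show False using nl unfolding R_def lam0_eq by simp
      qed
      define p where "p = (max (fst y) 0, max (snd y) 0)"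
      have "sqdist2 p y = m2 y" by (auto simp: sqdist2_def m2_def p_def max_def)
      then have pS: "p \<in> S" using c unfolding S R_def by (auto simp: p_def nonneg2_def)
      have cvx: "(fst u + t*(fst v - fst u), snd u + t*(snd v - snd u)) \<in> S"
        if "u \<in> S" "v \<in> S" "0 \<le> t" "t \<le> 1" for u v t
      proof -
        have u: "0 \<le> fst u" "0 \<le> snd u" "sqdist2 u y \<le> R" and v: "0 \<le> fst v" "0 \<le> snd v" "sqdist2 v y \<le> R"
          using that(1,2) S by (auto simp: nonneg2_def)
        have "0 \<le> (1-t) * fst u + t * fst v" "0 \<le> (1-t) * snd u + t * snd v"
          using u v that(3,4) by simp_all
        then have nn: "0 \<le> fst u + t*(fst v - fst u)" "0 \<le> snd u + t*(snd v - snd u)"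
          by (simp_all add: algebra_simps)
        have "sqdist2 (fst u + t*(fst v - fst u), snd u + t*(snd v - snd u)) y \<le> (1-t) * sqdist2 u y + t * sqdist2 v y"
          using conv_sq[OF that(3,4), of "fst u" "fst v" "fst y"] conv_sq[OF that(3,4), of "snd u" "snd v" "snd y"]
          by (simp add: sqdist2_def algebra_simps)
        also have "\<dots> \<le> (1-t) * R + t * R"
          using u v that(3,4) by (intro add_mono mult_left_mono) auto
        finally show ?thesis using nn S by (simp add: nonneg2_def algebra_simps)
      qed
      have hcv: "hfun (fst u + t*(fst v - fst u), snd u + t*(snd v - snd u)) = hfun u + t * (hfun v - hfun u)" for u v t
        by (simp add: hfun_def algebra_simps)
      have cl: "closed S"
      proof -
        have "S = {x. 0 \<le> fst x} \<inter> {x. 0 \<le> snd x} \<inter> {x. sqdist2 x y \<le> R}" unfolding S nonneg2_def by auto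
        moreover have "closed {x::real\<times>real. 0 \<le> fst x}" by (intro closed_Collect_le continuous_intros)
        moreover have "closed {x::real\<times>real. 0 \<le> snd x}" by (intro closed_Collect_le continuous_intros)
        moreover have "closed {x. sqdist2 x y \<le> R}" unfolding sqdist2_def by (intro closed_Collect_le continuous_intros)
        ultimately show ?thesis by auto
      qed
      have bd: "bounded S"
      proof -
        have "S \<subseteq> cball y (sqrt R)"
        proof
          fix x assume "x \<in> S"
          then have "sqdist2 x y \<le> R" using S by auto
          moreover have "dist y x = sqrt (sqdist2 x y)"
            by (cases x, cases y) (simp add: dist_Pair_Pair dist_real_def sqdist2_def power2_commute)
          ultimately show "x \<in> cball y (sqrt R)" by simp
        qed
        then show ?thesis using bounded_cball bounded_subset by blast
      qed
      have cp: "compact S" using cl bd by (simp add: compact_eq_bounded_closed)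
      have ch: "continuous_on S hfun" unfolding hfun_def by (intro continuous_intros)
      have ne: "S \<noteq> {}" using pS by auto
      have "hfun p \<noteq> 0" using nd pS by blast
      then consider "hfun p > 0" | "hfun p < 0" by linarith
      then show False
      proof cases
        case 1
        have pos: "hfun q > 0" if "q \<in> S" for q
        proof (rule ccontr)
          assume "\<not> hfun q > 0"
          then have q: "hfun q < 0" using nd[OF that] by linarith
          define t where "t = hfun p / (hfun p - hfun q)"
          have "0 \<le> t" "t \<le> 1" using 1 q by (auto simp: t_def field_simps)
          then have "(fst p + t*(fst q - fst p), snd p + t*(snd q - snd p)) \<in> S" using cvx pS that by blast
          moreover have "hfun p + t * (hfun q - hfun p) = 0" using 1 q by (simp add: t_def field_simps)
          ultimately show False using nd hcv by metis
        qed
        obtain x0 where x0: "x0 \<in> S" "\<And>x. x \<in> S \<Longrightarrow> hfun x0 \<le> hfun x"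
          using continuous_attains_inf[OF cp ne ch] by blast
        have "Inf (hfun ` S) = hfun x0" using x0 by (intro cInf_eq_minimum) auto
        then show False using rc cov pos[OF x0(1)] by simp
      next
        case 2
        have neg: "hfun q < 0" if "q \<in> S" for q
        proof (rule ccontr)
          assume "\<not> hfun q < 0"
          then have q: "hfun q > 0" using nd[OF that] by linarith
          define t where "t = hfun p / (hfun p - hfun q)"
          have "0 \<le> t" "t \<le> 1" using 2 q by (auto simp: t_def field_simps)
          then have "(fst p + t*(fst q - fst p), snd p + t*(snd q - snd p)) \<in> S" using cvx pS that by blast
          moreover have "hfun p + t * (hfun q - hfun p) = 0" using 2 q by (simp add: t_def field_simps)
          ultimately show False using nd hcv by metis
        qed
        obtain x0 where x0: "x0 \<in> S" "\<And>x. x \<in> S \<Longrightarrow> hfun x \<le> hfun x0"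
          using continuous_attains_sup[OF cp ne ch] by blast
        have "Sup (hfun ` S) = hfun x0" using x0 by (intro cSup_eq_maximum) auto
        then show False using rc cov neg[OF x0(1)] by simp
      qed
    qed
  qed
qed



abbreviation NN :: "real \<Rightarrow> real measure" where
  "NN a \<equiv> density lborel (\<lambda>t. ennreal (normal_density a 1 t))"

lemma gauss2_eq: "gauss2 a = NN a \<Otimes>\<^sub>M NN a"
proof -
  have sf: "sigma_finite_measure (NN a)"
    by (rule prob_space_imp_sigma_finite, rule prob_space_normal_density) simp
  have "NN a \<Otimes>\<^sub>M NN a = density (lborel \<Otimes>\<^sub>M lborel) (\<lambda>(x,y). ennreal (normal_density a 1 x) * ennreal (normal_density a 1 y))"
    by (rule pair_measure_density) (auto simp: sf lborel.sigma_finite_measure_axioms)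
  also have "\<dots> = gauss2 a"
    unfolding gauss2_def lborel_prod
    by (rule arg_cong[where f="density lborel"]) (auto simp: ennreal_mult)
  finally show ?thesis ..
qed

lemma gauss2_facts:
  shows "prob_space (gauss2 a)"
    and "distributed (gauss2 a) lborel (\<lambda>y. (fst y - snd y) / sqrt 2) std_normal_density"
proof -
  interpret N: prob_space "NN a" by (rule prob_space_normal_density) simp
  interpret P: pair_prob_space "NN a" "NN a" ..
  have pM: "prob_space (gauss2 a)" unfolding gauss2_eq by (rule P.prob_space_axioms)
  interpret M: prob_space "gauss2 a" by (rule pM)
  show "prob_space (gauss2 a)" by (rule pM)
  have sets: "sets (gauss2 a) = sets (borel \<Otimes>\<^sub>M borel)"
    unfolding gauss2_eq by (intro sets_pair_measure_cong) auto
  have d1: "distr (gauss2 a) lborel fst = NN a"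
  proof -
    have "distr (gauss2 a) lborel fst = distr (NN a \<Otimes>\<^sub>M NN a) (NN a) fst"
      unfolding gauss2_eq by (intro distr_cong) auto
    also have "\<dots> = NN a" by (rule N.distr_pair_fst)
    finally show ?thesis .
  qed
  have d2: "distr (gauss2 a) lborel snd = NN a"
  proof -
    have "distr (gauss2 a) lborel snd = distr (NN a \<Otimes>\<^sub>M NN a) (NN a) snd"
      unfolding gauss2_eq by (intro distr_cong) auto
    also have "\<dots> = NN a"
    proof (intro measure_eqI)
      fix A assume A: "A \<in> sets (distr (NN a \<Otimes>\<^sub>M NN a) (NN a) snd)"
      then have "emeasure (distr (NN a \<Otimes>\<^sub>M NN a) (NN a) snd) A = emeasure (NN a \<Otimes>\<^sub>M NN a) (space (NN a) \<times> A)"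
        by (auto simp add: emeasure_distr space_pair_measure dest: sets.sets_into_space intro!: arg_cong2[where f=emeasure])
      with A show "emeasure (distr (NN a \<Otimes>\<^sub>M NN a) (NN a) snd) A = emeasure (NN a) A"
        using N.emeasure_pair_measure_Times[of UNIV "NN a" A] N.emeasure_space_1 by simp
    qed simp
    finally show ?thesis .
  qed
  have mf: "fst \<in> measurable (gauss2 a) lborel" "snd \<in> measurable (gauss2 a) lborel"
  proof -
    have "fst \<in> measurable (NN a \<Otimes>\<^sub>M NN a) (NN a)" "snd \<in> measurable (NN a \<Otimes>\<^sub>M NN a) (NN a)"
      by (rule measurable_fst, rule measurable_snd)
    moreover have "measurable (NN a \<Otimes>\<^sub>M NN a) (NN a) = measurable (gauss2 a) lborel"
      unfolding gauss2_eq by (rule measurable_cong_sets) simp_all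
    ultimately show "fst \<in> measurable (gauss2 a) lborel" "snd \<in> measurable (gauss2 a) lborel" by simp_all
  qed
  have df: "distributed (gauss2 a) lborel fst (normal_density a 1)"
    unfolding distributed_def using d1 mf by auto
  have ds: "distributed (gauss2 a) lborel snd (normal_density a 1)"
    unfolding distributed_def using d2 mf by auto
  have ind: "M.indep_var borel fst borel snd"
    unfolding M.indep_var_distribution_eq
  proof (intro conjI)
    show "M.random_variable borel fst" "M.random_variable borel snd" using mf measurable_cong_sets[of "gauss2 a" "gauss2 a" lborel borel] by simp_all
    have "distr (gauss2 a) borel fst = NN a" using d1 distr_cong[of "gauss2 a" "gauss2 a" borel lborel fst fst] by simp
    moreover have "distr (gauss2 a) borel snd = NN a" using d2 distr_cong[of "gauss2 a" "gauss2 a" borel lborel snd snd] by simp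
    moreover have "distr (gauss2 a) (borel \<Otimes>\<^sub>M borel) (\<lambda>x. (fst x, snd x)) = gauss2 a"
    proof -
      have "distr (gauss2 a) (borel \<Otimes>\<^sub>M borel) (\<lambda>x. (fst x, snd x)) = distr (gauss2 a) (gauss2 a) (\<lambda>x. x)"
        using sets by (intro distr_cong) auto
      then show ?thesis by simp
    qed
    ultimately show "distr (gauss2 a) borel fst \<Otimes>\<^sub>M distr (gauss2 a) borel snd =
      distr (gauss2 a) (borel \<Otimes>\<^sub>M borel) (\<lambda>x. (fst x, snd x))" using gauss2_eq by simp
  qed
  have "distributed (gauss2 a) lborel (\<lambda>x. fst x - snd x) (normal_density (a - a) (sqrt (1\<^sup>2 + 1\<^sup>2)))"
    by (rule M.diff_indep_normal[OF ind _ _ df ds]) auto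
  then have dd: "distributed (gauss2 a) lborel (\<lambda>x. fst x - snd x) (normal_density 0 (sqrt 2))" by simp
  have "distributed (gauss2 a) lborel (\<lambda>x. 0 + (1 / sqrt 2) * (fst x - snd x))
          (normal_density (0 + (1 / sqrt 2) * 0) (\<bar>1 / sqrt 2\<bar> * sqrt 2))"
    by (rule M.normal_density_affine[OF dd]) auto
  then show "distributed (gauss2 a) lborel (\<lambda>y. (fst y - snd y) / sqrt 2) std_normal_density"
    by simp
qed


lemma lam0_fun: "lam0 = (\<lambda>y::real\<times>real. (fst y ^ 2 + snd y ^ 2) * (if fst y + snd y < 0 then 1 else 0)
          + (1/2) * (fst y - snd y) ^ 2 * (if fst y + snd y \<ge> 0 then 1 else 0)
          - fst y ^ 2 * (if fst y < 0 then 1 else 0)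
          - snd y ^ 2 * (if snd y < 0 then 1 else 0))"
  using lam0_formula by blast

lemma lam0_meas: "lam0 \<in> borel_measurable (gauss2 a)"
  unfolding gauss2_eq lam0_fun by measurable

lemma stdN_null0: "measure stdN {0} = 0"
proof -
  have "{0} \<in> null_sets stdN" unfolding stdN_def
  proof (subst null_sets_density_iff)
    have "AE x in lborel. x \<in> {0} \<longrightarrow> ennreal (std_normal_density x) = 0"
      using AE_lborel_singleton[of 0] by eventually_elim auto
    then show "{0} \<in> sets lborel \<and> (AE x in lborel. x \<in> {0} \<longrightarrow> ennreal (std_normal_density x) = 0)" by simp
  qed simp
  then show ?thesis by (auto dest: null_setsD1 simp: measure_def)
qed

lemma stdN_sym: "measure stdN {t. t < - z} = measure stdN {t. z < t}"
proof -
  interpret S: prob_space stdN unfolding stdN_def by (rule prob_space_normal_density) simp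
  have d: "distributed stdN lborel (\<lambda>x. x) std_normal_density"
    unfolding distributed_def
  proof (intro conjI)
    show "distr stdN lborel (\<lambda>x. x) = density lborel (\<lambda>x. ennreal (std_normal_density x))"
    proof -
      have "distr stdN lborel (\<lambda>x. x) = distr stdN stdN (\<lambda>x. x)" by (intro distr_cong) (auto simp: stdN_def)
      then show ?thesis by (simp add: stdN_def)
    qed
    show "(\<lambda>x. ennreal (std_normal_density x)) \<in> borel_measurable lborel" by simp
    show "(\<lambda>x. x) \<in> measurable stdN lborel" unfolding stdN_def by simp
  qed
  have "distributed stdN lborel (\<lambda>x. 0 + (-1) * x) (normal_density (0 + (-1) * 0) (\<bar>-1\<bar> * 1))"
    by (rule S.normal_density_affine[OF d]) auto
  then have d2: "distributed stdN lborel uminus std_normal_density" by simp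
  then have e: "distr stdN lborel uminus = stdN" "uminus \<in> measurable stdN lborel"
    unfolding distributed_def stdN_def by auto
  have "measure stdN {t. z < t} = measure (distr stdN lborel uminus) {t. z < t}" using e by simp
  also have "\<dots> = measure stdN (uminus -` {t. z < t} \<inter> space stdN)"
    by (rule measure_distr[OF e(2)]) simp
  also have "uminus -` {t. z < t} \<inter> space stdN = {t. t < - z}" by (auto simp: stdN_def)
  finally show ?thesis ..
qed

lemma part2: "measure (gauss2 a) {y. lam0 y > z} \<le> measure stdN {t. t ^ 2 > z}"
proof -
  interpret M: prob_space "gauss2 a" by (rule gauss2_facts(1))
  define W where "W = (\<lambda>y::real\<times>real. (fst y - snd y) / sqrt 2)"
  have d: "distributed (gauss2 a) lborel W std_normal_density" unfolding W_def by (rule gauss2_facts(2))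
  then have e: "distr (gauss2 a) lborel W = stdN" "W \<in> measurable (gauss2 a) lborel"
    unfolding distributed_def stdN_def by auto
  have sp: "space (gauss2 a) = UNIV" by (simp add: gauss2_def)
  have B: "W -` {t. t ^ 2 > z} \<inter> space (gauss2 a) \<in> sets (gauss2 a)"
    by (rule measurable_sets[OF e(2)]) simp
  have sub: "{y. lam0 y > z} \<subseteq> W -` {t. t ^ 2 > z} \<inter> space (gauss2 a)"
  proof
    fix y assume "y \<in> {y. lam0 y > z}"
    then have "z < lam0 y" by simp
    moreover have "(W y)^2 = (fst y - snd y)^2 / 2" by (simp add: W_def power_divide)
    ultimately show "y \<in> W -` {t. t ^ 2 > z} \<inter> space (gauss2 a)" using lam0_le[of y] sp by simp
  qed
  have "measure (gauss2 a) {y. lam0 y > z} \<le> measure (gauss2 a) (W -` {t. t ^ 2 > z} \<inter> space (gauss2 a))"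
    by (rule M.finite_measure_mono[OF sub B])
  also have "\<dots> = measure (distr (gauss2 a) lborel W) {t. t ^ 2 > z}"
    by (rule measure_distr[symmetric, OF e(2)]) simp
  also have "\<dots> = measure stdN {t. t ^ 2 > z}" using e by simp
  finally show ?thesis .
qed

lemma part3:
  assumes "0 < \<alpha>" "\<alpha> < 1" "measure stdN {t. t > z} = \<alpha> / 2"
  shows "measure (gauss2 a) {y. rb_covers y (z ^ 2) (a, a)} \<ge> 1 - \<alpha>"
proof -
  interpret S: prob_space stdN unfolding stdN_def by (rule prob_space_normal_density) simp
  interpret M: prob_space "gauss2 a" by (rule gauss2_facts(1))
  have spS: "space stdN = UNIV" by (simp add: stdN_def)
  have ev: "{t::real. P t} \<in> sets stdN" if "{t::real. P t} \<in> sets borel" for P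
    using that by (simp add: stdN_def)
  have zpos: "0 < z"
  proof (rule ccontr)
    assume "\<not> 0 < z"
    then have "{t. 0 < t} \<subseteq> {t::real. z < t}" by auto
    moreover have "{t::real. z < t} \<in> sets stdN" unfolding stdN_def sets_density sets_lborel by measurable
    ultimately have m1: "measure stdN {t. 0 < t} \<le> \<alpha>/2" using assms(3)
      by (metis S.finite_measure_mono)
    have u: "UNIV = ({t::real. 0 < t} \<union> {t. t < -0}) \<union> {0}" by auto
    have "1 = measure stdN UNIV" using S.prob_space spS by simp
    also have "\<dots> = measure stdN ({t::real. 0 < t} \<union> {t. t < -0}) + measure stdN {0}"
      by (subst u, rule S.finite_measure_Union) (auto simp: stdN_def)
    also have "\<dots> = measure stdN {t::real. 0 < t} + measure stdN {t. t < -0}"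
      by (subst S.finite_measure_Union) (auto simp: stdN_def stdN_null0[unfolded stdN_def])
    also have "\<dots> = 2 * measure stdN {t::real. 0 < t}" using stdN_sym[of 0] by simp
    finally show False using m1 assms(2) by simp
  qed
  have sq: "{t::real. t ^ 2 > z ^ 2} = {t. z < t} \<union> {t. t < - z}"
  proof safe
    fix t :: real assume h: "z ^ 2 < t ^ 2" "\<not> t < - z"
    show "z < t"
    proof (rule ccontr)
      assume "\<not> z < t"
      then have "\<bar>t\<bar> \<le> z" using h(2) by auto
      then have "\<bar>t\<bar>^2 \<le> z^2" by (rule power_mono) simp
      then show False using h(1) by simp
    qed
  next
    fix t :: real assume "z < t"
    then show "z^2 < t^2" using zpos by (intro power_strict_mono) auto
  next
    fix t :: real assume "t < - z"
    then have "z^2 < (-t)^2" using zpos by (intro power_strict_mono) auto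
    then show "z^2 < t^2" by simp
  qed
  have mN: "measure stdN {t. t ^ 2 > z ^ 2} = \<alpha>"
    unfolding sq using zpos assms(3) stdN_sym[of z]
    by (subst S.finite_measure_Union) (auto simp: stdN_def)
  have A0: "lam0 -` {t. z^2 < t} \<inter> space (gauss2 a) \<in> sets (gauss2 a)"
    by (rule measurable_sets[OF lam0_meas]) simp
  have A: "{y. z^2 < lam0 y} \<in> sets (gauss2 a)" using A0 by (simp add: gauss2_def vimage_def)
  have spM: "space (gauss2 a) = UNIV" by (simp add: gauss2_def)
  have "{y. rb_covers y (z ^ 2) (a, a)} = space (gauss2 a) - {y. z^2 < lam0 y}"
    using cover_iff[of "z^2"] spM by auto
  then have "measure (gauss2 a) {y. rb_covers y (z ^ 2) (a, a)} = 1 - measure (gauss2 a) {y. z^2 < lam0 y}"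
    using M.prob_compl[OF A] by simp
  moreover have "measure (gauss2 a) {y. z^2 < lam0 y} \<le> \<alpha>" using part2[of a "z^2"] mN by simp
  ultimately show ?thesis by simp
qed

theorem lemma4p4:
  fixes a :: real
  assumes "a \<ge> 0"
  shows "(\<forall>y. lam0 y =
            (fst y ^ 2 + snd y ^ 2) * (if fst y + snd y < 0 then 1 else 0)
          + (1/2) * (fst y - snd y) ^ 2 * (if fst y + snd y \<ge> 0 then 1 else 0)
          - fst y ^ 2 * (if fst y < 0 then 1 else 0)
          - snd y ^ 2 * (if snd y < 0 then 1 else 0))
     \<and> (\<forall>z::real. measure (gauss2 a) {y. lam0 y > z} \<le> measure stdN {t. t ^ 2 > z})
     \<and> (\<forall>\<alpha>::real. \<forall>z::real. 0 < \<alpha> \<and> \<alpha> < 1 \<and> measure stdN {t. t > z} = \<alpha> / 2 \<longrightarrow>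
          measure (gauss2 a) {y. rb_covers y (z ^ 2) (a, a)} \<ge> 1 - \<alpha>)"
  using lam0_formula part2 part3 by blast

end
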